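(* Let $P$ be an instance of $k$-means clustering with $z$ outliers, $|P|=n$, let $\delta,\xi\in(0,1)$, let $S$ be a finite multiset of points of $P$ satisfying, for every $1\le j\le k$, $$\sum_{q\in S\cap C^*_j}\|q-o^*_j\|^2\le(1+\delta)\frac{|S|}{n}\Big(\sum_{p\in C^*_j}\|p-o^*_j\|^2+\xi|C^*_j|\mathcal{L}^2\Big),$$ let $0<z'<|S|$ with $|S\setminus P_{opt}|\le z'$, let $H$ be a set of $k$ centers in $\mathbb{R}^D$ with $\Delta^{-z'}_2(S,H)\le c\cdot\min_{|H'|=k}\Delta^{-z'}_2(S,H')$ for some $c\ge1$, and let $S_{in}\subseteq S$ be the $|S|-z'$ points of $S$ attaining $\Delta^{-z'}_2(S,H)$ (i.e., $S$ minus its $z'$ points farthest from $H$). Then $$Cost(S_{in}\cap P_{opt},H)\le(1+\delta)\frac{|S|}{n}\cdot c\cdot\big(Cost(P_{opt},O^* )+(n-z)\xi\mathcal{L}^2\big).$$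
   Context: $P\subset\mathbb{R}^D$, $0<z<n$. $dist(p,H)=\min_{q\in H}\|p-q\|$; for a finite multiset $Q$ and $0<w<|Q|$, $\Delta^{-w}_2(Q,H)=\min\{\frac{1}{|Q'|}\sum_{p\in Q'}dist(p,H)^2:Q'\subseteq Q,|Q'|=|Q|-w\}$; $Cost(X,Y)=\sum_{q\in X}dist(q,Y)^2$ (with multiplicity). $P_{opt}\subset P$ with $|P_{opt}|=n-z$ is the set of inliers of an optimal solution of $k$-means with $z$ outliers, $C^*_1,\dots,C^*_k$ the optimal clusters forming $P_{opt}$, $o^*_j$ the mean of $C^*_j$, $O^*=\{o^*_1,\dots,o^*_k\}$, $\mathcal{L}=\max_j\max_{p,q\in C^*_j}\|p-q\|$. *)

theory Defs
  imports "HOL-Analysis.Analysis" "HOL-Library.Multiset"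
begin

definition kcost :: "'a::euclidean_space multiset \<Rightarrow> 'a set \<Rightarrow> real" where
  "kcost X Y = sum_mset (image_mset (\<lambda>q. (infdist q Y)\<^sup>2) X)"

definition trimmed_avg :: "'a::euclidean_space multiset \<Rightarrow> nat \<Rightarrow> 'a set \<Rightarrow> real" where
  "trimmed_avg Q w H =
     Min ((\<lambda>Q'. kcost Q' H / real (size Q')) ` {Q'. Q' \<subseteq># Q \<and> size Q' = size Q - w})"

definition opt_kmeans_outliers ::
  "'a::euclidean_space set \<Rightarrow> nat \<Rightarrow> nat \<Rightarrow> 'a set \<Rightarrow> (nat \<Rightarrow> 'a set) \<Rightarrow> (nat \<Rightarrow> 'a) \<Rightarrow> bool" where
  "opt_kmeans_outliers P k z Popt C ctr \<longleftrightarrow>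
     Popt \<subseteq> P \<and> card Popt = card P - z \<and>
     (\<forall>j\<in>{1..k}. C j \<noteq> {}) \<and>
     (\<forall>i\<in>{1..k}. \<forall>j\<in>{1..k}. i \<noteq> j \<longrightarrow> C i \<inter> C j = {}) \<and>
     (\<Union>j\<in>{1..k}. C j) = Popt \<and>
     (\<forall>j\<in>{1..k}. \<forall>p\<in>C j. \<forall>i\<in>{1..k}. dist p (ctr j) \<le> dist p (ctr i)) \<and>
     (\<forall>j\<in>{1..k}. ctr j = (1 / real (card (C j))) *\<^sub>R (\<Sum>p\<in>C j. p)) \<and>
     (\<forall>Q H. Q \<subseteq> P \<longrightarrow> card Q = card P - z \<longrightarrow> finite H \<longrightarrow> card H = k \<longrightarrow>
        kcost (mset_set Popt) (ctr ` {1..k}) \<le> kcost (mset_set Q) H)"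

definition clusters_diam :: "nat \<Rightarrow> (nat \<Rightarrow> 'a::euclidean_space set) \<Rightarrow> real" where
  "clusters_diam k C = Max {dist p q | j p q. j \<in> {1..k} \<and> p \<in> C j \<and> q \<in> C j}"

end

theory Submission
  imports Defs
begin


lemma exists_submset_size:
  "n \<le> size (M::'b multiset) \<Longrightarrow> \<exists>M'. M' \<subseteq># M \<and> size M' = n"
proof (induction M arbitrary: n)
  case empty
  then show ?case by auto
next
  case (add x M)
  show ?case
  proof (cases "n \<le> size M")
    case True
    then obtain M' where "M' \<subseteq># M" "size M' = n" using add.IH by blast
    then show ?thesis proof -
      have "M \<subseteq># add_mset x M" by (metis add_mset_add_single mset_subset_eq_add_left)
      then show ?thesis using \<open>M' \<subseteq># M\<close> \<open>size M' = n\<close> subset_mset.order_trans by blast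
    qed
  next
    case False
    then have "n = size (add_mset x M)" using add.prems by simp
    then show ?thesis by blast
  qed
qed

lemma sum_mset_nonneg_real:
  "(\<And>x. x \<in># M \<Longrightarrow> (0::real) \<le> f x) \<Longrightarrow> 0 \<le> sum_mset (image_mset f M)"
  by (induction M) auto

lemma sum_mset_submset_le:
  assumes "M' \<subseteq># M" "\<And>x. x \<in># M \<Longrightarrow> (0::real) \<le> f x"
  shows "sum_mset (image_mset f M') \<le> sum_mset (image_mset f M)"
proof -
  have "M = M' + (M - M')" using assms(1) by (simp add: subset_mset.add_diff_inverse)
  then have "sum_mset (image_mset f M) = sum_mset (image_mset f M') + sum_mset (image_mset f (M - M'))"
    by (metis image_mset_union sum_mset.union)
  moreover have "0 \<le> sum_mset (image_mset f (M - M'))"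
    using assms(2) by (intro sum_mset_nonneg_real) (auto dest: in_diffD)
  ultimately show ?thesis by simp
qed

lemma sum_mset_swap:
  "sum_mset (image_mset (\<lambda>q. \<Sum>j\<in>J. f q j) M) = (\<Sum>j\<in>J. sum_mset (image_mset (\<lambda>q. f q j) M))"
  by (induction M) (auto simp: sum.distrib)

lemma sum_mset_if_filter:
  "sum_mset (image_mset (\<lambda>q. if P q then g q else (0::real)) M) = sum_mset (image_mset g (filter_mset P M))"
  by (induction M) auto

lemma infinite_UNIV_euclidean: "infinite (UNIV :: 'a::euclidean_space set)"
proof
  assume fin: "finite (UNIV :: 'a set)"
  obtain b :: 'a where b: "b \<in> Basis" using nonempty_Basis by blast
  then have "b \<noteq> 0" by auto
  have "inj (\<lambda>r::real. r *\<^sub>R b)"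
    using \<open>b \<noteq> 0\<close> by (auto intro: injI)
  then have "infinite (range (\<lambda>r::real. r *\<^sub>R b))"
    using finite_imageD infinite_UNIV_char_0 by blast
  then show False using fin by (meson finite_subset top_greatest)
qed

lemma extend_card:
  assumes "finite (A::'a::euclidean_space set)" "card A \<le> k"
  shows "\<exists>B. A \<subseteq> B \<and> finite B \<and> card B = k"
proof -
  have "infinite (UNIV - A)" using assms(1) infinite_UNIV_euclidean by auto
  then obtain E where E: "finite E" "card E = k - card A" "E \<subseteq> UNIV - A"
    using infinite_arbitrarily_large by blast
  have "card (A \<union> E) = card A + card E"
    using E assms(1) by (intro card_Un_disjoint) auto
  then show ?thesis using E assms by (intro exI[of _ "A \<union> E"]) auto
qed

lemma trimmed_avg_le:
  assumes "Q' \<subseteq># Q" "size Q' = size Q - w"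
  shows "trimmed_avg Q w H \<le> kcost Q' H / real (size Q')"
  unfolding trimmed_avg_def
proof (rule Min_le)
  have "{Q'. Q' \<subseteq># Q \<and> size Q' = size Q - w} \<subseteq> multisets_of_size (set_mset Q) (size Q - w)"
    by (auto simp: multisets_of_size_def dest: mset_subset_eqD)
  then show "finite ((\<lambda>Q'. kcost Q' H / real (size Q')) ` {Q'. Q' \<subseteq># Q \<and> size Q' = size Q - w})"
    by (meson finite_imageI finite_multisets_of_size finite_set_mset finite_subset)
  show "kcost Q' H / real (size Q') \<in> (\<lambda>Q'. kcost Q' H / real (size Q')) ` {Q'. Q' \<subseteq># Q \<and> size Q' = size Q - w}"
    using assms by auto
qed

lemma trimmed_avg_nonneg:
  assumes "w \<le> size Q"
  shows "0 \<le> trimmed_avg Q w H"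
proof -
  obtain Q' where Q': "Q' \<subseteq># Q" "size Q' = size Q - w" using exists_submset_size[of "size Q - w" Q] by auto
  have fin: "finite ((\<lambda>Q'. kcost Q' H / real (size Q')) ` {Q'. Q' \<subseteq># Q \<and> size Q' = size Q - w})"
  proof -
    have "{Q'. Q' \<subseteq># Q \<and> size Q' = size Q - w} \<subseteq> multisets_of_size (set_mset Q) (size Q - w)"
      by (auto simp: multisets_of_size_def dest: mset_subset_eqD)
    then show ?thesis
      by (meson finite_imageI finite_multisets_of_size finite_set_mset finite_subset)
  qed
  have ne: "(\<lambda>Q'. kcost Q' H / real (size Q')) ` {Q'. Q' \<subseteq># Q \<and> size Q' = size Q - w} \<noteq> {}"
    using Q' by auto
  have "\<forall>x\<in>(\<lambda>Q'. kcost Q' H / real (size Q')) ` {Q'. Q' \<subseteq># Q \<and> size Q' = size Q - w}. 0 \<le> x"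
    by (auto simp: kcost_def intro!: divide_nonneg_nonneg sum_mset_nonneg_real)
  then show ?thesis unfolding trimmed_avg_def using Min_in[OF fin ne] by blast
qed

theorem lemma9:
  fixes P :: "'a::euclidean_space set" and k z z' :: nat
    and Popt :: "'a set" and C :: "nat \<Rightarrow> 'a set" and ctr :: "nat \<Rightarrow> 'a"
    and S S_in :: "'a multiset" and H :: "'a set" and \<delta> \<xi> c :: real
  assumes finP: "finite P"
    and z_pos: "0 < z" and z_lt: "z < card P"
    and k_pos: "1 \<le> k"
    and opt: "opt_kmeans_outliers P k z Popt C ctr"
    and delta: "0 < \<delta>" "\<delta> < 1" and xi: "0 < \<xi>" "\<xi> < 1"
    and S_P: "set_mset S \<subseteq> P"
    and S_good: "\<forall>j\<in>{1..k}.
        sum_mset (image_mset (\<lambda>q. (norm (q - ctr j))\<^sup>2) (filter_mset (\<lambda>q. q \<in> C j) S))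
        \<le> (1 + \<delta>) * (real (size S) / real (card P)) *
           ((\<Sum>p\<in>C j. (norm (p - ctr j))\<^sup>2) + \<xi> * real (card (C j)) * (clusters_diam k C)\<^sup>2)"
    and z'_pos: "0 < z'" and z'_lt: "z' < size S"
    and S_out: "size (filter_mset (\<lambda>q. q \<notin> Popt) S) \<le> z'"
    and H_fin: "finite H" and H_card: "card H = k"
    and c_ge: "1 \<le> c"
    and H_approx: "trimmed_avg S z' H
        \<le> c * Inf {trimmed_avg S z' H' | H'. finite H' \<and> card H' = k}"
    and S_in_sub: "S_in \<subseteq># S" and S_in_size: "size S_in = size S - z'"
    and S_in_att: "kcost S_in H / real (size S_in) = trimmed_avg S z' H"
  shows "kcost (filter_mset (\<lambda>q. q \<in> Popt) S_in) H
     \<le> (1 + \<delta>) * (real (size S) / real (card P)) * c *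
        (kcost (mset_set Popt) (ctr ` {1..k})
         + (real (card P) - real z) * \<xi> * (clusters_diam k C)\<^sup>2)"
proof -
  note o0 = opt[unfolded opt_kmeans_outliers_def]
  note o1 = conjunct1[OF o0]
  note r1 = conjunct2[OF o0]
  note o2 = conjunct1[OF r1]
  note r2 = conjunct2[OF r1]
  note o3 = conjunct1[OF r2]
  note r3 = conjunct2[OF r2]
  note o4 = conjunct1[OF r3]
  note r4 = conjunct2[OF r3]
  note o5 = conjunct1[OF r4]
  note r5 = conjunct2[OF r4]
  note o6 = conjunct1[OF r5]
  note o = o1 o2 o3 o4 o5 o6
  define Oc where "Oc = ctr ` {1..k}"
  define L where "L = clusters_diam k C"
  define n where "n = card P"
  define B where "B = (1 + \<delta>) * (real (size S) / real n) *
        (kcost (mset_set Popt) Oc + (real n - real z) * \<xi> * L\<^sup>2)"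
  have finPopt: "finite Popt" using o1 finP finite_subset by blast
  have CPopt: "C j \<subseteq> Popt" if "j \<in> {1..k}" for j using o5 that by blast
  have finC: "finite (C j)" if "j \<in> {1..k}" for j using CPopt[OF that] finPopt finite_subset by blast
  have Ofin: "finite Oc" and One: "Oc \<noteq> {}" using k_pos by (auto simp: Oc_def)
  have disj: "disjoint_family_on C {1..k}"
    using o4 unfolding disjoint_family_on_def by blast
  have Pcard: "card Popt = n - z" using o2 n_def by simp
  have zn: "z \<le> n" using z_lt n_def by simp
  have infd: "infdist p Oc = dist p (ctr j)" if "j \<in> {1..k}" "p \<in> C j" for p j
  proof (rule antisym)
    show "infdist p Oc \<le> dist p (ctr j)" using that by (auto simp: Oc_def intro: infdist_le)
    obtain y where "y \<in> Oc" "infdist p Oc = dist p y"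
      using infdist_attains_inf[of Oc p] Ofin One finite_imp_closed by blast
    then show "dist p (ctr j) \<le> infdist p Oc" using o6 that by (auto simp: Oc_def)
  qed
  have costsplit: "kcost (mset_set Popt) Oc = (\<Sum>j\<in>{1..k}. \<Sum>p\<in>C j. (norm (p - ctr j))\<^sup>2)"
  proof -
    have "kcost (mset_set Popt) Oc = (\<Sum>p\<in>Popt. (infdist p Oc)\<^sup>2)"
      by (simp add: kcost_def sum_unfold_sum_mset)
    also have "\<dots> = (\<Sum>p\<in>(\<Union>j\<in>{1..k}. C j). (infdist p Oc)\<^sup>2)" using o5 by simp
    also have "\<dots> = (\<Sum>j\<in>{1..k}. \<Sum>p\<in>C j. (infdist p Oc)\<^sup>2)"
      using disj finC by (intro sum.UNION_disjoint_family) auto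
    also have "\<dots> = (\<Sum>j\<in>{1..k}. \<Sum>p\<in>C j. (norm (p - ctr j))\<^sup>2)"
      by (intro sum.cong refl) (simp add: infd dist_norm)
    finally show ?thesis .
  qed
  have cardsplit: "(\<Sum>j\<in>{1..k}. real (card (C j))) = real n - real z"
  proof -
    have "card Popt = card (\<Union>j\<in>{1..k}. C j)" using o5 by simp
    also have "\<dots> = (\<Sum>j\<in>{1..k}. card (C j))"
      using disj finC by (intro card_UN_disjoint') auto
    finally have "real (card Popt) = (\<Sum>j\<in>{1..k}. real (card (C j)))" by simp
    then show ?thesis using Pcard zn by (simp add: of_nat_diff)
  qed
  define SP where "SP = filter_mset (\<lambda>q. q \<in> Popt) S"
  have key: "kcost SP Oc \<le> B"
  proof -
    have pt: "(infdist q Oc)\<^sup>2 \<le> (\<Sum>j\<in>{1..k}. if q \<in> C j then (norm (q - ctr j))\<^sup>2 else 0)"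
      if "q \<in># SP" for q
    proof -
      have "q \<in> Popt" using that by (simp add: SP_def)
      then obtain j where j: "j \<in> {1..k}" "q \<in> C j" using o5 by blast
      have "(\<Sum>i\<in>{1..k}. if q \<in> C i then (norm (q - ctr i))\<^sup>2 else 0)
          = (\<Sum>i\<in>{j}. if q \<in> C i then (norm (q - ctr i))\<^sup>2 else 0)"
      proof (rule sum.mono_neutral_right)
        show "\<forall>i\<in>{1..k} - {j}. (if q \<in> C i then (norm (q - ctr i))\<^sup>2 else 0) = 0"
        proof
          fix i assume i: "i \<in> {1..k} - {j}"
          then have "C i \<inter> C j = {}" using o4 j(1) by blast
          then have "q \<notin> C i" using j(2) by blast
          then show "(if q \<in> C i then (norm (q - ctr i))\<^sup>2 else 0) = 0" by simp
        qed
        show "finite {1..k}" by simp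
        show "{j} \<subseteq> {1..k}" using j(1) by simp
      qed
      also have "\<dots> = (norm (q - ctr j))\<^sup>2" using j by simp
      finally show ?thesis using infd[OF j] by (simp add: dist_norm)
    qed
    have "kcost SP Oc \<le> sum_mset (image_mset (\<lambda>q. \<Sum>j\<in>{1..k}. if q \<in> C j then (norm (q - ctr j))\<^sup>2 else 0) SP)"
      unfolding kcost_def by (rule sum_mset_mono) (rule pt)
    also have "\<dots> = (\<Sum>j\<in>{1..k}. sum_mset (image_mset (\<lambda>q. (norm (q - ctr j))\<^sup>2) (filter_mset (\<lambda>q. q \<in> C j) SP)))"
      by (simp add: sum_mset_swap sum_mset_if_filter)
    also have "\<dots> = (\<Sum>j\<in>{1..k}. sum_mset (image_mset (\<lambda>q. (norm (q - ctr j))\<^sup>2) (filter_mset (\<lambda>q. q \<in> C j) S)))"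
    proof (intro sum.cong refl)
      fix j assume "j \<in> {1..k}"
      then have "filter_mset (\<lambda>q. q \<in> C j) SP = filter_mset (\<lambda>q. q \<in> C j) S"
      proof -
        have "C j \<subseteq> Popt" using CPopt \<open>j \<in> {1..k}\<close> by blast
        then show ?thesis unfolding SP_def filter_filter_mset by (intro filter_mset_cong) auto
      qed
      then show "sum_mset (image_mset (\<lambda>q. (norm (q - ctr j))\<^sup>2) (filter_mset (\<lambda>q. q \<in> C j) SP)) =
                 sum_mset (image_mset (\<lambda>q. (norm (q - ctr j))\<^sup>2) (filter_mset (\<lambda>q. q \<in> C j) S))" by simp
    qed
    also have "\<dots> \<le> (\<Sum>j\<in>{1..k}. (1 + \<delta>) * (real (size S) / real n) *
           ((\<Sum>p\<in>C j. (norm (p - ctr j))\<^sup>2) + \<xi> * real (card (C j)) * L\<^sup>2))"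
      using S_good by (intro sum_mono) (auto simp: n_def L_def)
    also have "\<dots> = (1 + \<delta>) * (real (size S) / real n) *
           ((\<Sum>j\<in>{1..k}. \<Sum>p\<in>C j. (norm (p - ctr j))\<^sup>2) + \<xi> * L\<^sup>2 * (\<Sum>j\<in>{1..k}. real (card (C j))))"
      by (simp add: sum_distrib_left sum.distrib algebra_simps)
    also have "\<dots> = B" unfolding B_def costsplit cardsplit by (simp add: algebra_simps)
    finally show ?thesis .
  qed
  define m where "m = size S - z'"
  have m_pos: "0 < m" using z'_lt m_def by simp
  have "size SP + size (filter_mset (\<lambda>q. q \<notin> Popt) S) = size S"
    unfolding SP_def by (metis multiset_partition size_union)
  then have "m \<le> size SP" using S_out m_def by linarith
  then obtain S' where S': "S' \<subseteq># SP" "size S' = m" using exists_submset_size by blast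
  have S'S: "S' \<subseteq># S" using S' unfolding SP_def by (meson multiset_filter_subset subset_mset.order_trans)
  have "card Oc \<le> k" unfolding Oc_def by (metis card_atLeastAtMost card_image_le diff_Suc_1 finite_atLeastAtMost)
  then obtain O' where O': "Oc \<subseteq> O'" "finite O'" "card O' = k" using extend_card Ofin by blast
  have kS': "kcost S' O' \<le> B"
  proof -
    have "kcost S' O' \<le> kcost S' Oc"
      unfolding kcost_def
      by (intro sum_mset_mono power_mono infdist_mono O' One infdist_nonneg)
    also have "\<dots> \<le> kcost SP Oc"
      unfolding kcost_def by (intro sum_mset_submset_le S') auto
    finally show ?thesis using key by simp
  qed
  have t1: "trimmed_avg S z' O' \<le> kcost S' O' / real m"
    using trimmed_avg_le[OF S'S] S' m_def by simp
  have "Inf {trimmed_avg S z' H' | H'. finite H' \<and> card H' = k} \<le> trimmed_avg S z' O'"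
  proof (rule cInf_lower)
    show "trimmed_avg S z' O' \<in> {trimmed_avg S z' H' | H'. finite H' \<and> card H' = k}" using O' by blast
    show "bdd_below {trimmed_avg S z' H' | H'. finite H' \<and> card H' = k}"
      using trimmed_avg_nonneg[of z' S] z'_lt by (intro bdd_belowI[of _ 0]) auto
  qed
  then have ta: "trimmed_avg S z' H \<le> c * (B / real m)"
    using H_approx t1 kS' c_ge m_pos
    by (smt (verit, del_insts) divide_right_mono mult_left_mono of_nat_0_le_iff)
  have "kcost (filter_mset (\<lambda>q. q \<in> Popt) S_in) H \<le> kcost S_in H"
    unfolding kcost_def by (intro sum_mset_submset_le multiset_filter_subset) auto
  also have "\<dots> = real m * trimmed_avg S z' H"
    using S_in_att S_in_size m_def m_pos by (simp add: field_simps)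
  also have "\<dots> \<le> real m * (c * (B / real m))"
    using ta m_pos by (intro mult_left_mono) auto
  also have "\<dots> = c * B" using m_pos by simp
  finally show ?thesis unfolding B_def n_def Oc_def L_def by (simp add: algebra_simps)
qed

end
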